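(* Let $K\ge 1$ be an integer, $\mathcal{K}=\{0,\pm1,\dots,\pm K\}$, fix $i\in\mathcal{K}$, and let $L,h,d,\eta,P_t,\sigma^2,\gamma_0>0$. Fix a reference user location $(x_u^i,y_u^i,0)$ with $x_u^i\in[-L/2,L/2]$ and $y_u^i\in[id-d/2,\,id+d/2]$. Let $\{x_u^k\}_{k\in\mathcal{K}\setminus\{i\}}$ be independent random variables, each uniformly distributed on $[-L/2,L/2]$. Define $$\hat r_0=(id-y_u^i)^2+h^2,\qquad \hat r_k=(x_u^k-x_u^i)^2+(kd-y_u^i)^2+h^2\ \ (k\in\mathcal{K}\setminus\{i\}),$$ and the SINR $$\gamma_u^i=\frac{\hat r_0^{-1}}{\eta\sum_{k\in\mathcal{K}\setminus\{i\}}\hat r_k^{-1}+\frac{\sigma^2}{P_t}}.$$ Let $\mathcal{P}_s=\mathbb{P}(\gamma_u^i>\gamma_0)$ and $$A=\frac{\sigma^2}{\eta P_t}+\sum_{k\in\mathcal{K}\setminus\{i\}}\hat r_k^{-1}-\frac{\hat r_0^{-1}}{\eta\gamma_0}$$ (viewed as a function of the $2K$ variables $x_u^k$, $k\in\mathcal{K}\setminus\{i\}$). Then $$\mathcal{P}_s=\frac12-\frac1\pi\left(\frac1L\right)^{2K}\int_0^\infty \mathrm{Im}\left(\int_{-L/2}^{L/2}\!\!\cdots\int_{-L/2}^{L/2} e^{jtA}\prod_{k\in\mathcal{K}\setminus\{i\}}\mathrm{d}x_u^k\right)\frac{\mathrm{d}t}{t},$$ where the inner integral is a $2K$-fold integral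 over all $x_u^k$, $k\in\mathcal{K}\setminus\{i\}$, $j$ is the imaginary unit and $\mathrm{Im}$ denotes the imaginary part.
   Context: Setting (pinching-antenna system in a room): $2K+1$ waveguides lie on the ceiling at height $h$ along the lines $y=kd$, $z=h$, $k\in\mathcal{K}$, each of length $L$ (so $x\in[-L/2,L/2]$). Waveguide $k$ carries one pinching antenna placed directly above its served user $u_k$, i.e. at $(x_u^k,kd,h)$, where the users' $x$-coordinates are uniformly distributed along the room length independently of each other. The reference user $u_i$ is at $(x_u^i,y_u^i,0)$ and is served by the antenna at $(x_u^i,id,h)$; the other antennas act as interferers. $\eta$ is the reference path-loss constant, $P_t$ the per-antenna transmit power, $\sigma^2$ the noise variance, $\gamma_0$ the SINR threshold. The SINR used by the paper is exactly the expression $\gamma_u^i$ given in the claim, and $\mathcal{P}_s$ is called the successful transmission probability. *)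

theory Defs
  imports "HOL-Probability.Probability"
begin

definition interferers :: "int \<Rightarrow> int \<Rightarrow> int set" where
  "interferers K i = {-K..K} - {i}"

definition r0 :: "real \<Rightarrow> real \<Rightarrow> int \<Rightarrow> real \<Rightarrow> real" where
  "r0 h d i yu = (real_of_int i * d - yu)\<^sup>2 + h\<^sup>2"

definition rk :: "real \<Rightarrow> real \<Rightarrow> int \<Rightarrow> real \<Rightarrow> real \<Rightarrow> real \<Rightarrow> real" where
  "rk h d k xk xu yu = (xk - xu)\<^sup>2 + (real_of_int k * d - yu)\<^sup>2 + h\<^sup>2"

definition sinr ::
  "int \<Rightarrow> int \<Rightarrow> real \<Rightarrow> real \<Rightarrow> real \<Rightarrow> real \<Rightarrow> real \<Rightarrow> real \<Rightarrow> real \<Rightarrow> (int \<Rightarrow> real) \<Rightarrow> real" where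
  "sinr K i h d \<eta> Pt \<sigma>2 xu yu x =
     inverse (r0 h d i yu) /
       (\<eta> * (\<Sum>k\<in>interferers K i. inverse (rk h d k (x k) xu yu)) + \<sigma>2 / Pt)"

definition Afun ::
  "int \<Rightarrow> int \<Rightarrow> real \<Rightarrow> real \<Rightarrow> real \<Rightarrow> real \<Rightarrow> real \<Rightarrow> real \<Rightarrow> real \<Rightarrow> real \<Rightarrow> (int \<Rightarrow> real) \<Rightarrow> real" where
  "Afun K i h d \<eta> Pt \<sigma>2 \<gamma>0 xu yu x =
     \<sigma>2 / (\<eta> * Pt) + (\<Sum>k\<in>interferers K i. inverse (rk h d k (x k) xu yu))
     - inverse (r0 h d i yu) / (\<eta> * \<gamma>0)"

end

theory Submission
  imports Defs
begin

lemma sin_div_bound: "\<bar>sin (t * a) / t\<bar> \<le> \<bar>a\<bar>" for t a :: real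
proof (cases "t = 0")
  case False
  have "\<bar>sin (t * a)\<bar> \<le> \<bar>t\<bar> * \<bar>a\<bar>" using abs_sin_x_le_abs_x[of "t*a"] by (simp add: abs_mult)
  then show ?thesis using False by (simp add: abs_div divide_le_eq mult.commute)
qed simp

lemma sgn_integral_aux:
  fixes N :: "'b measure" and f :: "'b \<Rightarrow> real"
  assumes N: "prob_space N" and fm[measurable]: "f \<in> borel_measurable N"
    and null: "emeasure N {x\<in>space N. f x = 0} = 0"
  shows "(\<integral>x. sgn (f x) * (pi/2) \<partial>N) = pi/2 - pi * measure N {x\<in>space N. f x < 0}"
proof -
  interpret N: prob_space N by fact
  have S[measurable]: "{x\<in>space N. f x < 0} \<in> sets N" by measurable
  have i1: "integrable N (indicator {x\<in>space N. f x < 0} :: _ \<Rightarrow> real)"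
    by (intro integrable_real_indicator S) (simp add: less_top[symmetric])
  have ae: "AE x in N. f x \<noteq> 0"
    using null by (intro AE_I[of _ _ "{x\<in>space N. f x = 0}"]) auto
  have "(\<integral>x. sgn (f x) * (pi/2) \<partial>N) = (\<integral>x. pi/2 - pi * indicator {x\<in>space N. f x < 0} x \<partial>N)"
  proof (rule integral_cong_AE)
    show "AE x in N. sgn (f x) * (pi/2) = pi/2 - pi * indicator {x\<in>space N. f x < 0} x"
      using ae AE_space by eventually_elim (auto simp: sgn_real_def split: split_indicator)
  qed measurable
  also have "\<dots> = (\<integral>x. pi/2 \<partial>N) - (\<integral>x. pi * indicator {x\<in>space N. f x < 0} x \<partial>N)"
    by (rule Bochner_Integration.integral_diff[OF N.integrable_const integrable_mult_right[OF i1]])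
  also have "\<dots> = pi/2 - pi * measure N {x\<in>space N. f x < 0}"
    using N.prob_space by simp
  finally show ?thesis .
qed

lemma gil_pelaez:
  fixes N :: "'b measure" and f :: "'b \<Rightarrow> real"
  assumes N: "prob_space N" and fm[measurable]: "f \<in> borel_measurable N"
    and bnd: "\<And>x. x \<in> space N \<Longrightarrow> \<bar>f x\<bar> \<le> C"
    and null: "emeasure N {x\<in>space N. f x = 0} = 0"
  shows "((\<lambda>T. integral {0..T} (\<lambda>t. Im (\<integral>x. cis (t * f x) \<partial>N) / t))
           \<longlongrightarrow> pi/2 - pi * measure N {x\<in>space N. f x < 0}) at_top"
proof -
  interpret N: prob_space N by fact
  interpret P: pair_sigma_finite lborel N ..
  define g where "g t = Im (\<integral>x. cis (t * f x) \<partial>N) / t" for t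
  define F where "F T t x = indicator {0<..<T} t * (sin (t * f x) / t)" for T t x
  have Fint: "integrable (lborel \<Otimes>\<^sub>M N) (case_prod (F T))" if "T \<ge> 0" for T
  proof (rule integrableI_bounded_set[where A="{0<..<T} \<times> space N" and B=C])
    show "emeasure (lborel \<Otimes>\<^sub>M N) ({0<..<T} \<times> space N) < \<infinity>"
      using that by (simp add: N.emeasure_pair_measure_Times ennreal_mult_less_top N.emeasure_space_1)
    show "AE x in lborel \<Otimes>\<^sub>M N. x \<in> {0<..<T} \<times> space N \<longrightarrow> norm (case_prod (F T) x) \<le> C"
    proof (intro AE_I2 impI)
      fix z assume "z \<in> {0<..<T} \<times> space N"
      then show "norm (case_prod (F T) z) \<le> C"
        using bnd[of "snd z"] sin_div_bound[of "fst z" "f (snd z)"]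
        by (cases z) (auto simp: F_def)
    qed
    show "AE x in lborel \<Otimes>\<^sub>M N. x \<notin> {0<..<T} \<times> space N \<longrightarrow> case_prod (F T) x = 0"
      by (intro AE_I2) (auto simp: F_def space_pair_measure indicator_def)
  qed (unfold F_def, measurable)
  have gF: "(\<integral>x. F T t x \<partial>N) = indicator {0<..<T} t * g t" for T t
  proof -
    have "(\<integral>x. F T t x \<partial>N) = indicator {0<..<T} t * ((\<integral>x. sin (t * f x) \<partial>N) / t)"
      by (simp add: F_def)
    also have "(\<integral>x. sin (t * f x) \<partial>N) = Im (\<integral>x. cis (t * f x) \<partial>N)"
    proof -
      have "integrable N (\<lambda>x. cis (t * f x))"
      proof (intro N.integrable_const_bound[where B=1])
        have "cis \<in> borel_measurable borel"
          by (intro borel_measurable_continuous_onI continuous_intros)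
        then show "(\<lambda>x. cis (t * f x)) \<in> borel_measurable N"
          by (rule measurable_compose[rotated]) simp
      qed auto
      then show ?thesis using integral_Im[of N "\<lambda>x. cis (t * f x)"] by simp
    qed
    finally show ?thesis by (simp add: g_def)
  qed
  have inner: "(\<integral>t. F T t x \<partial>lborel) = sgn (f x) * Si (T * \<bar>f x\<bar>)" if "T \<ge> 0" for T x
  proof -
    have "(\<integral>t. F T t x \<partial>lborel) = (LBINT t=ereal 0..ereal T. sin (t * f x) / t)"
      using that by (simp add: F_def interval_lebesgue_integral_def set_lebesgue_integral_def)
    also have "\<dots> = sgn (f x) * Si (T * \<bar>f x\<bar>)"
      using LBINT_I0c_sin_scale_divide[OF that] by (simp add: zero_ereal_def)
    finally show ?thesis .
  qed
  have main: "integral {0..T} g = (\<integral>x. sgn (f x) * Si (T * \<bar>f x\<bar>) \<partial>N)" if "T \<ge> 0" for T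
  proof -
    have i1: "integrable lborel (\<lambda>t. \<integral>x. F T t x \<partial>N)"
      using P.integrable_fst[OF Fint[OF that]] .
    have si: "set_integrable lborel {0<..<T} g"
      unfolding set_integrable_def using i1 by (simp add: gF)
    have "integral {0..T} g = integral {0<..<T} g"
      by (simp add: integral_open_interval_real)
    also have "\<dots> = (LINT t : {0<..<T} | lborel. g t)"
      using set_borel_integral_eq_integral(2)[OF si] by simp
    also have "\<dots> = (\<integral>t. \<integral>x. F T t x \<partial>N \<partial>lborel)"
      by (simp add: gF set_lebesgue_integral_def)
    also have "\<dots> = (\<integral>x. \<integral>t. F T t x \<partial>lborel \<partial>N)"
      using P.Fubini_integral[OF Fint[OF that]] by simp
    also have "\<dots> = (\<integral>x. sgn (f x) * Si (T * \<bar>f x\<bar>) \<partial>N)"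
      using inner[OF that] by simp
    finally show ?thesis .
  qed
  obtain B where B: "\<And>T. \<bar>Si T\<bar> \<le> B" using bounded_Si by auto
  have lim: "((\<lambda>T. \<integral>x. sgn (f x) * Si (T * \<bar>f x\<bar>) \<partial>N) \<longlongrightarrow> (\<integral>x. sgn (f x) * (pi/2) \<partial>N)) at_top"
  proof (rule integral_dominated_convergence_at_top[where w="\<lambda>_. B"])
    show "integrable N (\<lambda>_. B)" by simp
    show "\<forall>\<^sub>F T in at_top. AE x in N. norm (sgn (f x) * Si (T * \<bar>f x\<bar>)) \<le> B"
      using B order_trans[OF abs_ge_zero B[of 0]] by (intro always_eventually allI AE_I2) (auto simp: abs_mult abs_sgn_eq)
    have "AE x in N. f x \<noteq> 0"
      using null by (intro AE_I[of _ _ "{x\<in>space N. f x = 0}"]) auto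
    then show "AE x in N. ((\<lambda>T. sgn (f x) * Si (T * \<bar>f x\<bar>)) \<longlongrightarrow> sgn (f x) * (pi/2)) at_top"
    proof eventually_elim
      case (elim x)
      have "filterlim (\<lambda>T. T * \<bar>f x\<bar>) at_top at_top"
        using elim by (intro filterlim_at_top_mult_tendsto_pos[OF tendsto_const] filterlim_ident) auto
      then show ?case
        by (intro tendsto_mult tendsto_const filterlim_compose[OF Si_at_top])
    qed
  qed auto
  have val: "(\<integral>x. sgn (f x) * (pi/2) \<partial>N) = pi/2 - pi * measure N {x\<in>space N. f x < 0}"
    by (rule sgn_integral_aux[OF N fm null])
  show ?thesis
    unfolding g_def[symmetric]
    using lim unfolding val[symmetric]
    by (rule Lim_transform_eventually) (auto intro: eventually_mono[OF eventually_ge_at_top[of 0]] main[symmetric])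
qed

lemma card_interferers:
  assumes "K \<ge> 0" "i \<in> {-K..K}"
  shows "card (interferers K i) = 2 * nat K"
  using assms unfolding interferers_def by (subst card_Diff_singleton) (auto simp: nat_add_distrib)

lemma finite_interferers: "finite (interferers K i)"
  by (simp add: interferers_def)

lemma Afun_measurable:
  "Afun K i h d \<eta> Pt \<sigma>2 \<gamma>0 xu yu \<in> borel_measurable (PiM (interferers K i) (\<lambda>_. lborel))"
  unfolding Afun_def rk_def by measurable

interpretation lb: product_sigma_finite "\<lambda>_::int. lborel :: real measure"
  by standard

lemma level_null:
  fixes I :: "int set" and c0 xu :: real and b :: "int \<Rightarrow> real" and F :: "(int \<Rightarrow> real) \<Rightarrow> real"
  assumes fin: "finite I" and k0: "k0 \<in> I" and bpos: "\<And>k. b k > 0"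
    and meas[measurable]: "F \<in> borel_measurable (PiM I (\<lambda>_. lborel))"
    and Fdef: "\<And>x. F x = c0 + (\<Sum>k\<in>I. inverse ((x k - xu)^2 + b k))"
  shows "emeasure (PiM I (\<lambda>_. lborel)) {x \<in> space (PiM I (\<lambda>_. lborel)). F x = 0} = 0"
proof -
  define J where "J = I - {k0}"
  have IJ: "I = insert k0 J" and k0J: "k0 \<notin> J" and finJ: "finite J"
    using k0 fin by (auto simp: J_def)
  define Z where "Z = {x \<in> space (PiM I (\<lambda>_. lborel)). F x = 0}"
  have Zs[measurable]: "Z \<in> sets (PiM I (\<lambda>_. lborel))" unfolding Z_def by measurable
  have inner: "(\<integral>\<^sup>+ y. indicator Z (x(k0 := y)) \<partial>lborel) = 0" for x :: "int \<Rightarrow> real"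
  proof -
    define c where "c = c0 + (\<Sum>k\<in>J. inverse ((x k - xu)^2 + b k))"
    define q where "q = - inverse c - b k0"
    have pt: "indicator Z (x(k0 := y)) \<le> (indicator {xu + sqrt q, xu - sqrt q} y :: ennreal)" for y
    proof (cases "x(k0 := y) \<in> Z")
      case True
      then have "F (x(k0 := y)) = 0" by (simp add: Z_def)
      moreover have "F (x(k0 := y)) = c + inverse ((y - xu)^2 + b k0)"
      proof -
        have "(\<Sum>k\<in>J. inverse (((x(k0 := y)) k - xu)^2 + b k)) = (\<Sum>k\<in>J. inverse ((x k - xu)^2 + b k))"
          using k0J by (intro sum.cong) auto
        then show ?thesis unfolding Fdef IJ using finJ k0J by (simp add: c_def)
      qed
      ultimately have e: "inverse ((y - xu)^2 + b k0) = - c" by simp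
      have D: "(y - xu)^2 + b k0 > 0" using bpos[of k0] by (simp add: add_nonneg_pos)
      then have "(y - xu)^2 + b k0 = inverse (- c)"
        using e by (metis inverse_inverse_eq)
      then have "(y - xu)^2 = q" by (simp add: q_def)
      then have "\<bar>y - xu\<bar> = sqrt q" by (metis real_sqrt_abs)
      then have "y \<in> {xu + sqrt q, xu - sqrt q}" by (auto simp: abs_if split: if_splits)
      then show ?thesis using True by simp
    qed simp
    have "(\<integral>\<^sup>+ y. indicator Z (x(k0 := y)) \<partial>lborel) \<le> (\<integral>\<^sup>+ y. indicator {xu + sqrt q, xu - sqrt q} y \<partial>lborel)"
      by (intro nn_integral_mono pt)
    also have "\<dots> = emeasure lborel {xu + sqrt q, xu - sqrt q}"
      by simp
    also have "\<dots> = 0"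
      using finite_imp_null_set_lborel[of "{xu + sqrt q, xu - sqrt q}"] by (auto dest: null_setsD1)
    finally show ?thesis by simp
  qed
  have "emeasure (PiM I (\<lambda>_. lborel)) Z = (\<integral>\<^sup>+ x. indicator Z x \<partial>PiM I (\<lambda>_. lborel))"
    by simp
  also have "\<dots> = (\<integral>\<^sup>+ x. (\<integral>\<^sup>+ y. indicator Z (x(k0 := y)) \<partial>lborel) \<partial>PiM J (\<lambda>_. lborel))"
    unfolding IJ by (rule lb.product_nn_integral_insert[OF finJ k0J]) (use Zs IJ in simp)
  also have "\<dots> = 0" by (simp add: inner)
  finally show ?thesis by (simp add: Z_def)
qed

lemma PiM_uniform:
  fixes I :: "int set" and S :: "real set"
  assumes fin: "finite I" and L: "L > 0" and S: "S = {-L/2..L/2}"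
  shows "PiM I (\<lambda>_. uniform_measure lborel S) = uniform_measure (PiM I (\<lambda>_. lborel)) (PiE I (\<lambda>_. S))"
proof -
  have SL: "emeasure lborel S = ennreal L" using L by (simp add: S)
  have "prob_space (uniform_measure lborel S)"
    by (rule prob_space_uniform_measure) (use SL L in \<open>auto simp: S\<close>)
  then interpret U: product_sigma_finite "\<lambda>_::int. uniform_measure lborel S"
    by (simp add: product_sigma_finite_def prob_space_imp_sigma_finite)
  have Ss[measurable, simp]: "S \<in> sets borel" by (simp add: S)
  have Bs: "PiE I (\<lambda>_. S) \<in> sets (PiM I (\<lambda>_. lborel))"
    by (intro sets_PiM_I_finite fin) (auto simp: S)
  show ?thesis
  proof (rule U.PiM_eqI[symmetric, OF fin])
    show "sets (uniform_measure (PiM I (\<lambda>_. lborel)) (PiE I (\<lambda>_. S))) = sets (PiM I (\<lambda>_. uniform_measure lborel S))"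
      by (simp cong: sets_PiM_cong)
    fix A assume A: "\<And>j. j \<in> I \<Longrightarrow> A j \<in> sets (uniform_measure lborel S)"
    then have A': "\<And>j. j \<in> I \<Longrightarrow> A j \<in> sets lborel" by simp
    define m where "m j = measure lborel (S \<inter> A j)" for j
    have em: "emeasure lborel (S \<inter> A j) = ennreal (m j)" if "j \<in> I" for j
    proof -
      have "emeasure lborel (S \<inter> A j) \<le> emeasure lborel S"
        by (rule emeasure_mono) (use A' that in \<open>auto simp: S\<close>)
      then have "emeasure lborel (S \<inter> A j) \<noteq> \<infinity>" using SL by (auto simp: top_unique)
      then show ?thesis by (simp add: m_def emeasure_eq_ennreal_measure)
    qed
    have m0: "0 \<le> m j" for j by (simp add: m_def)
    have PA: "PiE I A \<in> sets (PiM I (\<lambda>_. lborel))"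
      by (intro sets_PiM_I_finite fin A')
    have "emeasure (uniform_measure (PiM I (\<lambda>_. lborel)) (PiE I (\<lambda>_. S))) (PiE I A)
        = emeasure (PiM I (\<lambda>_. lborel)) (PiE I (\<lambda>_. S) \<inter> PiE I A) / emeasure (PiM I (\<lambda>_. lborel)) (PiE I (\<lambda>_. S))"
      by (rule emeasure_uniform_measure[OF Bs PA])
    also have "PiE I (\<lambda>_. S) \<inter> PiE I A = PiE I (\<lambda>j. S \<inter> A j)"
      by (simp add: PiE_Int)
    also have "emeasure (PiM I (\<lambda>_. lborel)) (PiE I (\<lambda>j. S \<inter> A j)) = (\<Prod>j\<in>I. ennreal (m j))"
      using A' by (subst lb.emeasure_PiM[OF fin]) (auto intro!: prod.cong simp: em)
    also have "emeasure (PiM I (\<lambda>_. lborel)) (PiE I (\<lambda>_. S)) = (\<Prod>j\<in>I. ennreal L)"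
      by (subst lb.emeasure_PiM[OF fin]) (auto simp: SL)
    also have "(\<Prod>j\<in>I. ennreal (m j)) / (\<Prod>j\<in>I. ennreal L) = ennreal (prod m I) / ennreal (L ^ card I)"
      using L m0 by (simp only: prod_ennreal prod_constant ennreal_power less_imp_le)
    also have "\<dots> = ennreal ((\<Prod>j\<in>I. m j) / L ^ card I)"
      by (rule divide_ennreal) (use m0 L in \<open>auto intro: prod_nonneg\<close>)
    also have "\<dots> = (\<Prod>j\<in>I. ennreal (m j / L))"
      using L m0 by (simp add: prod_ennreal prod_dividef)
    also have "\<dots> = (\<Prod>j\<in>I. emeasure (uniform_measure lborel S) (A j))"
    proof (rule prod.cong[OF refl])
      fix j assume j: "j \<in> I"
      show "ennreal (m j / L) = emeasure (uniform_measure lborel S) (A j)"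
        using A'[OF j] em[OF j] SL L m0 by (simp add: divide_ennreal)
    qed
    finally show "emeasure (uniform_measure (PiM I (\<lambda>_. lborel)) (PiE I (\<lambda>_. S))) (PiE I A)
        = (\<Prod>j\<in>I. emeasure (uniform_measure lborel S) (A j))" .
  qed
qed

lemma inv_rk_pos: "h > 0 \<Longrightarrow> 0 < inverse (rk h d k y xu yu)"
  unfolding rk_def by (simp add: add_nonneg_pos)

lemma inv_rk_le: "h > 0 \<Longrightarrow> inverse (rk h d k y xu yu) \<le> inverse (h^2)"
  unfolding rk_def by (intro le_imp_inverse_le) auto

lemma r0_pos: "h > 0 \<Longrightarrow> 0 < r0 h d i yu"
  unfolding r0_def by (simp add: add_nonneg_pos)

lemma sinr_iff:
  assumes h: "h > 0" and eta: "\<eta> > 0" and Pt: "Pt > 0" and s2: "\<sigma>2 > 0" and g0: "\<gamma>0 > 0"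
  shows "(sinr K i h d \<eta> Pt \<sigma>2 xu yu x > \<gamma>0) \<longleftrightarrow> (Afun K i h d \<eta> Pt \<sigma>2 \<gamma>0 xu yu x < 0)"
proof -
  define s where "s = (\<Sum>k\<in>interferers K i. inverse (rk h d k (x k) xu yu))"
  define r where "r = inverse (r0 h d i yu)"
  have s0: "s \<ge> 0" unfolding s_def using inv_rk_pos[OF h] by (intro sum_nonneg) (simp add: less_imp_le)
  have r0': "r > 0" unfolding r_def using r0_pos[OF h] by simp
  define D where "D = \<eta> * s + \<sigma>2 / Pt"
  have D0: "D > 0" unfolding D_def using s0 eta Pt s2 by (simp add: add_nonneg_pos)
  have sinr: "sinr K i h d \<eta> Pt \<sigma>2 xu yu x = r / D" by (simp add: sinr_def s_def r_def D_def)
  have Aeq: "Afun K i h d \<eta> Pt \<sigma>2 \<gamma>0 xu yu x * (\<eta> * \<gamma>0) = \<gamma>0 * D - r"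
  proof -
    have Aexp: "Afun K i h d \<eta> Pt \<sigma>2 \<gamma>0 xu yu x = \<sigma>2/(\<eta>*Pt) + s - r/(\<eta>*\<gamma>0)"
      by (simp only: Afun_def s_def r_def)
    show ?thesis unfolding Aexp D_def using eta g0 Pt by (simp add: field_simps)
  qed
  have "(sinr K i h d \<eta> Pt \<sigma>2 xu yu x > \<gamma>0) \<longleftrightarrow> \<gamma>0 * D < r"
    unfolding sinr using D0 by (simp add: pos_less_divide_eq)
  also have "\<dots> \<longleftrightarrow> Afun K i h d \<eta> Pt \<sigma>2 \<gamma>0 xu yu x * (\<eta> * \<gamma>0) < 0"
    unfolding Aeq by simp
  also have "\<dots> \<longleftrightarrow> Afun K i h d \<eta> Pt \<sigma>2 \<gamma>0 xu yu x < 0"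
    using eta g0 by (simp add: mult_less_0_iff)
  finally show ?thesis .
qed

lemma Afun_restrict:
  "Afun K i h d \<eta> Pt \<sigma>2 \<gamma>0 xu yu (restrict x (interferers K i)) = Afun K i h d \<eta> Pt \<sigma>2 \<gamma>0 xu yu x"
  unfolding Afun_def by (intro arg_cong2[where f="(-)"] arg_cong2[where f="(+)"] refl sum.cong) auto

theorem theorem1:
  fixes K i :: int and L h d \<eta> Pt \<sigma>2 \<gamma>0 xu yu :: real
    and M :: "'a measure" and X :: "int \<Rightarrow> 'a \<Rightarrow> real"
  assumes "K \<ge> 1" and "i \<in> {-K..K}"
    and "L > 0" "h > 0" "d > 0" "\<eta> > 0" "Pt > 0" "\<sigma>2 > 0" "\<gamma>0 > 0"
    and "xu \<in> {-L/2..L/2}"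
    and "yu \<in> {real_of_int i * d - d/2 .. real_of_int i * d + d/2}"
    and "prob_space M"
    and "prob_space.indep_vars M (\<lambda>_. borel) X (interferers K i)"
    and "\<And>k. k \<in> interferers K i \<Longrightarrow>
           distr M lborel (X k) = uniform_measure lborel {-L/2..L/2}"
  shows "\<exists>I. ((\<lambda>T. integral {0..T}
                 (\<lambda>t. Im (set_lebesgue_integral (PiM (interferers K i) (\<lambda>_. lborel))
                          (PiE (interferers K i) (\<lambda>_. {-L/2..L/2}))
                          (\<lambda>x. cis (t * Afun K i h d \<eta> Pt \<sigma>2 \<gamma>0 xu yu x))) / t))
              \<longlongrightarrow> I) at_top
           \<and> measure M {\<omega> \<in> space M. sinr K i h d \<eta> Pt \<sigma>2 xu yu (\<lambda>k. X k \<omega>) > \<gamma>0}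
               = 1/2 - (1/pi) * (1/L) ^ (2 * nat K) * I"
proof -
  note K = assms(1) and iK = assms(2) and L = assms(3) and h = assms(4) and eta = assms(6)
    and Pt = assms(7) and s2 = assms(8) and g0 = assms(9)
  note indep = assms(13) and unif = assms(14)
  interpret M: prob_space M by fact
  define I where "I = interferers K i"
  define S where "S = {-L/2..L/2::real}"
  define U where "U = uniform_measure lborel S"
  define Q where "Q = PiM I (\<lambda>_. lborel::real measure)"
  define B where "B = PiE I (\<lambda>_. S)"
  define N where "N = uniform_measure Q B"
  define A where "A = Afun K i h d \<eta> Pt \<sigma>2 \<gamma>0 xu yu"
  define n where "n = 2 * nat K"
  have fin: "finite I" by (simp add: I_def finite_interferers)
  have cardI: "card I = n" using K iK by (simp add: I_def n_def card_interferers)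
  have Ine: "I \<noteq> {}" using cardI K by (auto simp: n_def)
  have Ss[measurable, simp]: "S \<in> sets borel" by (simp add: S_def)
  have Bs: "B \<in> sets Q" unfolding B_def Q_def by (intro sets_PiM_I_finite fin) auto
  have QB: "emeasure Q B = ennreal (L ^ n)"
  proof -
    have "emeasure Q B = (\<Prod>j\<in>I. emeasure lborel S)"
      unfolding Q_def B_def by (rule lb.emeasure_PiM[OF fin]) simp
    also have "\<dots> = (\<Prod>j\<in>I. ennreal L)" using L by (simp add: S_def)
    finally show ?thesis using L cardI by (simp add: ennreal_power)
  qed
  have probN: "prob_space N"
    unfolding N_def by (rule prob_space_uniform_measure) (use QB L in auto)
  interpret N: prob_space N by fact
  have setsN: "sets N = sets Q" by (simp add: N_def)
  have AmQ: "A \<in> borel_measurable Q" unfolding A_def Q_def I_def by (rule Afun_measurable)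
  have AmN: "A \<in> borel_measurable N" using AmQ by (simp add: measurable_cong_sets[OF setsN refl])
  define C where "C = \<sigma>2 / (\<eta> * Pt) + real n * inverse (h^2) + inverse (r0 h d i yu) / (\<eta> * \<gamma>0)"
  have Abnd: "\<bar>A x\<bar> \<le> C" for x
  proof -
    define s where "s = (\<Sum>k\<in>I. inverse (rk h d k (x k) xu yu))"
    have s0: "0 \<le> s" unfolding s_def using inv_rk_pos[OF h] by (intro sum_nonneg) (simp add: less_imp_le)
    have s1: "s \<le> real n * inverse (h^2)"
      unfolding s_def using sum_bounded_above[of I "\<lambda>k. inverse (rk h d k (x k) xu yu)" "inverse (h^2)"]
        inv_rk_le[OF h] cardI by simp
    have p1: "0 \<le> \<sigma>2 / (\<eta> * Pt)" using s2 eta Pt by simp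
    have p2: "0 \<le> inverse (r0 h d i yu) / (\<eta> * \<gamma>0)" using r0_pos[OF h, of d i yu] eta g0 by simp
    have Ax: "A x = \<sigma>2 / (\<eta> * Pt) + s - inverse (r0 h d i yu) / (\<eta> * \<gamma>0)"
      by (simp only: A_def Afun_def s_def I_def)
    show ?thesis unfolding Ax C_def using s0 s1 p1 p2 by (simp add: abs_le_iff)
  qed
  have AnullQ: "emeasure Q {x\<in>space Q. A x = 0} = 0"
  proof -
    obtain k0 where k0: "k0 \<in> I" using Ine by auto
    have bpos: "\<And>k. 0 < (real_of_int k * d - yu)^2 + h^2" using h by (simp add: add_nonneg_pos)
    have AmQ': "A \<in> borel_measurable (PiM I (\<lambda>_. lborel))" using AmQ by (simp add: Q_def)
    have Fd: "\<And>x. A x = (\<sigma>2 / (\<eta> * Pt) - inverse (r0 h d i yu) / (\<eta> * \<gamma>0)) +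
          (\<Sum>k\<in>I. inverse ((x k - xu)^2 + ((real_of_int k * d - yu)^2 + h^2)))"
      by (simp add: A_def Afun_def rk_def I_def add.assoc)
    show ?thesis unfolding Q_def by (rule level_null[OF fin k0 bpos AmQ' Fd])
  qed
  have Anull: "emeasure N {x\<in>space N. A x = 0} = 0"
  proof -
    have Zs: "{x\<in>space Q. A x = 0} \<in> sets Q" using AmQ by measurable
    have "emeasure Q (B \<inter> {x\<in>space Q. A x = 0}) \<le> emeasure Q {x\<in>space Q. A x = 0}"
      by (rule emeasure_mono) (use Zs in auto)
    then have z: "emeasure Q (B \<inter> {x\<in>space Q. A x = 0}) = 0" using AnullQ by simp
    have "space N = space Q" by (simp add: N_def)
    then show ?thesis unfolding N_def using emeasure_uniform_measure[OF Bs Zs] z by simp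
  qed
  have lim: "((\<lambda>T. integral {0..T} (\<lambda>t. Im (\<integral>x. cis (t * A x) \<partial>N) / t))
           \<longlongrightarrow> pi/2 - pi * measure N {x\<in>space N. A x < 0}) at_top"
    by (rule gil_pelaez[OF probN AmN Abnd Anull])
  have Nd: "N = density Q (\<lambda>x. ennreal (indicator B x / L ^ n))"
    unfolding N_def uniform_measure_def QB
  proof (intro arg_cong[where f="density Q"] ext)
    fix x
    have Lp: "0 < L ^ n" using L by simp
    show "indicator B x / ennreal (L ^ n) = ennreal (indicator B x / L ^ n)"
      using divide_ennreal[OF _ Lp, of 1] by (cases "x \<in> B") auto
  qed
  have cism: "(\<lambda>x. cis (t * A x)) \<in> borel_measurable Q" for t
  proof -
    have "cis \<in> borel_measurable borel"
      by (intro borel_measurable_continuous_onI continuous_intros)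
    then show ?thesis
      by (rule measurable_compose[rotated]) (use AmQ in simp)
  qed
  have char: "set_lebesgue_integral Q B (\<lambda>x. cis (t * A x)) = complex_of_real (L ^ n) * (\<integral>x. cis (t * A x) \<partial>N)" for t
  proof -
    have "(\<integral>x. cis (t * A x) \<partial>N) = (\<integral>x. (indicator B x / L ^ n) *\<^sub>R cis (t * A x) \<partial>Q)"
      unfolding Nd by (rule integral_density) (use cism Bs L in \<open>auto intro!: AE_I2\<close>)
    also have "\<dots> = (\<integral>x. (1 / L ^ n) *\<^sub>R (indicator B x *\<^sub>R cis (t * A x)) \<partial>Q)"
      by (simp add: scaleR_scaleR)
    also have "\<dots> = (1 / L ^ n) *\<^sub>R set_lebesgue_integral Q B (\<lambda>x. cis (t * A x))"
      unfolding set_lebesgue_integral_def by (rule integral_scaleR_right)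
    finally show ?thesis using L by (simp add: scaleR_conv_of_real)
  qed
  have rv: "\<And>k. k \<in> I \<Longrightarrow> X k \<in> measurable M borel"
    using indep unfolding M.indep_vars_def I_def by auto
  have dist: "distr M (PiM I (\<lambda>_. borel)) (\<lambda>\<omega>. \<lambda>k\<in>I. X k \<omega>) = N"
  proof -
    have "distr M (PiM I (\<lambda>_. borel)) (\<lambda>\<omega>. \<lambda>k\<in>I. X k \<omega>) = PiM I (\<lambda>k. distr M borel (X k))"
      using M.indep_vars_iff_distr_eq_PiM'[OF Ine rv] indep by (simp add: I_def)
    also have "\<dots> = PiM I (\<lambda>_. U)"
    proof (rule PiM_cong[OF refl])
      fix k assume k: "k \<in> I"
      have "distr M borel (X k) = distr M lborel (X k)" by (rule distr_cong) auto
      also have "\<dots> = U" using unif k by (simp add: U_def S_def I_def)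
      finally show "distr M borel (X k) = U" .
    qed
    also have "\<dots> = N" unfolding U_def N_def Q_def B_def by (rule PiM_uniform[OF fin L S_def])
    finally show ?thesis .
  qed
  have prob: "measure M {\<omega>\<in>space M. sinr K i h d \<eta> Pt \<sigma>2 xu yu (\<lambda>k. X k \<omega>) > \<gamma>0} = measure N {x\<in>space N. A x < 0}"
  proof -
    have Xm: "(\<lambda>\<omega>. \<lambda>k\<in>I. X k \<omega>) \<in> measurable M (PiM I (\<lambda>_. borel))"
      by (intro measurable_restrict rv)
    have AmB: "A \<in> borel_measurable (PiM I (\<lambda>_. borel))"
    proof -
      have ss: "sets (PiM I (\<lambda>_. borel)) = sets Q" unfolding Q_def by (rule sets_PiM_cong) auto
      show ?thesis using AmQ unfolding measurable_cong_sets[OF ss refl] .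
    qed
    have Es: "{x\<in>space (PiM I (\<lambda>_. borel)). A x < 0} \<in> sets (PiM I (\<lambda>_. borel))"
      using AmB by measurable
    have "measure N {x\<in>space N. A x < 0} = measure (distr M (PiM I (\<lambda>_. borel)) (\<lambda>\<omega>. \<lambda>k\<in>I. X k \<omega>)) {x\<in>space (PiM I (\<lambda>_. borel)). A x < 0}"
      unfolding dist by (simp add: N_def Q_def space_PiM)
    also have "\<dots> = measure M ((\<lambda>\<omega>. \<lambda>k\<in>I. X k \<omega>) -` {x\<in>space (PiM I (\<lambda>_. borel)). A x < 0} \<inter> space M)"
      by (rule measure_distr[OF Xm Es])
    also have "(\<lambda>\<omega>. \<lambda>k\<in>I. X k \<omega>) -` {x\<in>space (PiM I (\<lambda>_. borel)). A x < 0} \<inter> space M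
        = {\<omega>\<in>space M. sinr K i h d \<eta> Pt \<sigma>2 xu yu (\<lambda>k. X k \<omega>) > \<gamma>0}"
      using Afun_restrict[of K i h d \<eta> Pt \<sigma>2 \<gamma>0 xu yu] sinr_iff[OF h eta Pt s2 g0, of K i d xu yu]
      by (auto simp: A_def I_def space_PiM)
    finally show ?thesis by simp
  qed
  define P where "P = measure N {x\<in>space N. A x < 0}"
  have lim2: "((\<lambda>T. integral {0..T}
                 (\<lambda>t. Im (set_lebesgue_integral Q B (\<lambda>x. cis (t * A x))) / t))
              \<longlongrightarrow> L ^ n * (pi/2 - pi * P)) at_top"
  proof -
    have "(\<lambda>T. integral {0..T} (\<lambda>t. Im (set_lebesgue_integral Q B (\<lambda>x. cis (t * A x))) / t))
        = (\<lambda>T. L ^ n * integral {0..T} (\<lambda>t. Im (\<integral>x. cis (t * A x) \<partial>N) / t))"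
      by (simp add: char times_divide_eq_right[symmetric] del: times_divide_eq_right)
    then show ?thesis using tendsto_mult_left[OF lim, of "L ^ n"] by (simp add: P_def)
  qed
  have fin_eq: "P = 1/2 - (1/pi) * (1/L) ^ n * (L ^ n * (pi/2 - pi * P))"
    using L by (simp add: field_simps power_one_over)
  show ?thesis
    apply (rule exI[of _ "L ^ n * (pi/2 - pi * P)"])
    using lim2 prob fin_eq unfolding Q_def B_def A_def I_def n_def S_def P_def by simp
qed

end
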